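(* Consider a single group of $N^t$ treated and $N^c$ control units with binary outcomes, where $U$ treated units have outcome 1, $V=N^t-U$ treated units have outcome 0, $\eta$ control units have outcome 1 and $\nu=N^c-\eta$ control units have outcome 0, and any treated unit may be paired with any control unit. Consider all matchings consisting of exactly $M=\min(N^t,N^c)$ disjoint treated–control pairs, and maximize $\chi=(B-C-1)/\sqrt{B+C+1}$ over them. (i) If $N^c>N^t$, there is a maximizing matching in which the unmatched control units consist of exactly $\min(N^c-N^t,\eta)$ units with outcome 1 and $\max(N^c-N^t-\eta,0)$ units with outcome 0. (ii) If $N^t\ge N^c$, there is a maximizing matching in which the unmatched treated units consist of exactly $\min(N^t-N^c,V)$ units with outcome 0 and $\max(U-N^c,0)$ units with outcome 1.
   Context: For a matching (a set of disjoint treated–control pairs), $B$ is the number of pairs in which the treated unit has outcome 1 and the control unit has outcome 0, and $C$ is the number of pairs in which the treated unit has outcome 0 and the control unit has outcome 1. *)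

theory Defs
  imports Complex_Main
begin

text \<open>Treated units form a finite set T (outcome yt), control units a finite set Cs
(outcome yc); outcome 1 is True. Any treated unit may be paired with any control unit.\<close>

definition is_matching :: "'a set \<Rightarrow> 'b set \<Rightarrow> ('a \<times> 'b) set \<Rightarrow> bool" where
  "is_matching T Cs P \<longleftrightarrow> P \<subseteq> T \<times> Cs \<and> inj_on fst P \<and> inj_on snd P"

definition full_matching :: "'a set \<Rightarrow> 'b set \<Rightarrow> ('a \<times> 'b) set \<Rightarrow> bool" where
  "full_matching T Cs P \<longleftrightarrow> is_matching T Cs P \<and> card P = min (card T) (card Cs)"

definition countB :: "('a \<Rightarrow> bool) \<Rightarrow> ('b \<Rightarrow> bool) \<Rightarrow> ('a \<times> 'b) set \<Rightarrow> nat" where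
  "countB yt yc P = card {p \<in> P. yt (fst p) \<and> \<not> yc (snd p)}"

definition countC :: "('a \<Rightarrow> bool) \<Rightarrow> ('b \<Rightarrow> bool) \<Rightarrow> ('a \<times> 'b) set \<Rightarrow> nat" where
  "countC yt yc P = card {p \<in> P. \<not> yt (fst p) \<and> yc (snd p)}"

definition chi :: "('a \<Rightarrow> bool) \<Rightarrow> ('b \<Rightarrow> bool) \<Rightarrow> ('a \<times> 'b) set \<Rightarrow> real" where
  "chi yt yc P = (real (countB yt yc P) - real (countC yt yc P) - 1)
                  / sqrt (real (countB yt yc P) + real (countC yt yc P) + 1)"

definition maximizer :: "'a set \<Rightarrow> 'b set \<Rightarrow> ('a \<Rightarrow> bool) \<Rightarrow> ('b \<Rightarrow> bool) \<Rightarrow> ('a \<times> 'b) set \<Rightarrow> bool" where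
  "maximizer T Cs yt yc P \<longleftrightarrow> full_matching T Cs P \<and>
     (\<forall>Q. full_matching T Cs Q \<longrightarrow> chi yt yc Q \<le> chi yt yc P)"

end

theory Submission imports Defs begin
lemma l2: fixes b s :: real assumes "s > 0" "b \<ge> 0" "b \<le> s" shows "b * sqrt (s+1) \<le> (b+1) * sqrt s"
proof -
  have "b * sqrt (s+1) = sqrt (b^2*(s+1))" using assms by (simp add: real_sqrt_mult)
  also have "\<dots> \<le> sqrt ((b+1)^2 * s)"
  proof (rule real_sqrt_le_mono)
    have "b*b \<le> b*s" using assms by (simp add: mult_left_mono)
    moreover have "0 \<le> b*s" using assms by simp
    moreover have "b^2*(s+1) = b*b*s + b*b" by (simp add: power2_eq_square algebra_simps)
    moreover have "(b+1)^2*s = b*b*s + 2*(b*s) + s" by (simp add: power2_eq_square algebra_simps)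
    ultimately show "b^2*(s+1) \<le> (b+1)^2 * s" using assms by linarith
  qed
  also have "\<dots> = (b+1) * sqrt s" using assms by (simp add: real_sqrt_mult)
  finally show ?thesis .
qed
lemma gB: fixes a s :: real assumes "s > 0" "a \<le> s" shows "a / sqrt s \<le> (a+1) / sqrt (s+1)"
proof (cases "a \<le> 0")
  case True
  have "a / sqrt s \<le> a / sqrt (s+1)"
    by (rule divide_left_mono_neg) (use assms True in auto)
  also have "\<dots> \<le> (a+1) / sqrt (s+1)" by (rule divide_right_mono) (use assms in auto)
  finally show ?thesis .
next
  case False
  have "a * sqrt (s+1) \<le> (a+1) * sqrt s" using l2[of s a] assms False by auto
  moreover have "sqrt s > 0" "sqrt (s+1) > 0" using assms by auto
  ultimately show ?thesis by (simp add: divide_simps)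
qed
lemma gC: fixes a s :: real assumes "s > 0" "-a \<le> s" shows "(a - 1) / sqrt (s+1) \<le> a / sqrt s"
proof (cases "a \<ge> 0")
  case True
  have "(a-1) / sqrt (s+1) \<le> a / sqrt (s+1)" by (rule divide_right_mono) (use assms in auto)
  also have "\<dots> \<le> a / sqrt s"
    by (rule divide_left_mono) (use assms True in auto)
  finally show ?thesis .
next
  case False
  have "(-a) * sqrt (s+1) \<le> (-a+1) * sqrt s" using l2[of s "-a"] assms False by auto
  moreover have "sqrt s > 0" "sqrt (s+1) > 0" using assms by auto
  ultimately show ?thesis by (simp add: divide_simps algebra_simps)
qed
definition fchi :: "nat \<Rightarrow> nat \<Rightarrow> real" where
 "fchi B C = (real B - real C - 1) / sqrt (real B + real C + 1)"
lemma fB: "fchi B C \<le> fchi (Suc B) C"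
  using gB[of "real B + real C + 1" "real B - real C - 1"] by (simp add: fchi_def algebra_simps)
lemma fC: "fchi B (Suc C) \<le> fchi B C"
  using gC[of "real B + real C + 1" "real B - real C - 1"] by (simp add: fchi_def algebra_simps)

lemma chi_fchi: "chi yt yc P = fchi (countB yt yc P) (countC yt yc P)"
  by (simp add: chi_def fchi_def)

lemma card_sep_diff:
  assumes "finite T" "M \<subseteq> T"
  shows "card {i \<in> T - M. Q i} = card {i \<in> T. Q i} - card {i \<in> M. Q i}"
proof -
  have "{i \<in> T - M. Q i} = {i \<in> T. Q i} - {i \<in> M. Q i}" by auto
  moreover have "{i \<in> M. Q i} \<subseteq> {i \<in> T. Q i}" using assms by auto
  ultimately show ?thesis using assms by (simp add: card_Diff_subset finite_subset)
qed

lemma card_sep_split: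
  assumes "finite T"
  shows "card {i \<in> T. Q i} + card {i \<in> T. \<not> Q i} = card T"
proof -
  have "T = {i \<in> T. Q i} \<union> {i \<in> T. \<not> Q i}" by auto
  then have "card T = card ({i \<in> T. Q i} \<union> {i \<in> T. \<not> Q i})" by simp
  also have "\<dots> = card {i \<in> T. Q i} + card {i \<in> T. \<not> Q i}"
    by (rule card_Un_disjoint) (use assms in auto)
  finally show ?thesis by simp
qed

lemma full_finite:
  assumes "finite T" "finite Cs"
  shows "finite {P. full_matching T Cs P}"
  by (rule finite_subset[of _ "Pow (T \<times> Cs)"]) (auto simp: full_matching_def is_matching_def assms)

lemma full_exists:
  assumes "finite T" "finite Cs" "card Cs \<le> card T"
  shows "\<exists>P. full_matching T Cs P"
proof -
  obtain f where f: "f ` Cs \<subseteq> T" "inj_on f Cs" using card_le_inj[OF assms(2,1,3)] by blast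
  let ?P = "(\<lambda>c. (f c, c)) ` Cs"
  have "is_matching T Cs ?P" using f unfolding is_matching_def inj_on_def by auto
  moreover have "card ?P = card Cs" by (rule card_image) (auto simp: inj_on_def)
  ultimately show ?thesis using assms(3) by (auto simp: full_matching_def)
qed

lemma maximizer_exists:
  assumes "finite T" "finite Cs" "card Cs \<le> card T"
  shows "\<exists>P. maximizer T Cs yt yc P"
proof -
  let ?F = "{P. full_matching T Cs P}"
  have fin: "finite (chi yt yc ` ?F)" using full_finite[OF assms(1,2)] by simp
  have ne: "chi yt yc ` ?F \<noteq> {}" using full_exists[OF assms] by auto
  obtain P where "P \<in> ?F" "chi yt yc P = Max (chi yt yc ` ?F)"
    using Max_in[OF fin ne] by auto
  moreover have "\<forall>Q\<in>?F. chi yt yc Q \<le> Max (chi yt yc ` ?F)" using fin by auto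
  ultimately show ?thesis unfolding maximizer_def by auto
qed

lemma improve:
  assumes fin: "finite T" "finite Cs" and full: "full_matching T Cs P"
  and i0: "i0 \<in> T" "i0 \<notin> fst ` P" "yt i0" and p: "(t,c) \<in> P" "\<not> yt t"
  defines "Q \<equiv> insert (i0,c) (P - {(t,c)})"
  shows "full_matching T Cs Q \<and> chi yt yc P \<le> chi yt yc Q
         \<and> card {q\<in>Q. yt (fst q)} = Suc (card {q\<in>P. yt (fst q)})"
proof -
  have sub: "P \<subseteq> T \<times> Cs" and ifst: "inj_on fst P" and isnd: "inj_on snd P"
    and cP: "card P = min (card T) (card Cs)"
    using full by (auto simp: full_matching_def is_matching_def)
  have finP: "finite P" using sub fin finite_subset by blast
  have nin: "(i0,c) \<notin> P" using i0 by force
  have cs: "c \<in> Cs" using p sub by auto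
  have sndc: "c \<notin> snd ` (P - {(t,c)})"
  proof
    assume "c \<in> snd ` (P - {(t,c)})"
    then obtain q where "q \<in> P" "q \<noteq> (t,c)" "snd q = c" by auto
    with isnd p show False by (metis inj_on_contraD snd_conv)
  qed
  have "is_matching T Cs Q"
    unfolding is_matching_def Q_def using sub i0 cs sndc
    by (auto intro!: inj_on_diff[OF ifst] inj_on_diff[OF isnd] simp: inj_on_insert)
  moreover have "card Q = card P"
    unfolding Q_def using nin p finP by (simp add: card.insert_remove) (metis Suc_pred card_gt_0_iff empty_iff)
  ultimately have fQ: "full_matching T Cs Q" using cP by (simp add: full_matching_def)
  have bQ: "countB yt yc Q = (if yc c then countB yt yc P else Suc (countB yt yc P))"
  proof -
    have e: "{q\<in>Q. yt (fst q) \<and> \<not> yc (snd q)} =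
      (if yc c then {q\<in>P. yt (fst q) \<and> \<not> yc (snd q)}
       else insert (i0,c) {q\<in>P. yt (fst q) \<and> \<not> yc (snd q)})"
      unfolding Q_def using p i0 by auto
    show ?thesis unfolding countB_def e using nin finP by auto
  qed
  have cQ: "countC yt yc Q = (if yc c then countC yt yc P - 1 else countC yt yc P)
            \<and> (yc c \<longrightarrow> countC yt yc P \<ge> 1)"
  proof -
    have e: "{q\<in>Q. \<not> yt (fst q) \<and> yc (snd q)} = {q\<in>P. \<not> yt (fst q) \<and> yc (snd q)} - {(t,c)}"
      unfolding Q_def using p i0 by auto
    have "yc c \<Longrightarrow> (t,c) \<in> {q\<in>P. \<not> yt (fst q) \<and> yc (snd q)}" using p by auto
    moreover have "finite {q\<in>P. \<not> yt (fst q) \<and> yc (snd q)}" using finP by auto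
    ultimately show ?thesis unfolding countC_def e
      by (auto simp: card_gt_0_iff Suc_le_eq)
  qed
  have chiQ: "chi yt yc P \<le> chi yt yc Q"
  proof (cases "yc c")
    case True
    then obtain k where k: "countC yt yc P = Suc k" using cQ by (metis Suc_pred less_eq_Suc_le One_nat_def)
    then show ?thesis using True bQ cQ fC[of "countB yt yc P" k] by (simp add: chi_fchi)
  next
    case False
    then show ?thesis using bQ cQ fB[of "countB yt yc P" "countC yt yc P"] by (simp add: chi_fchi)
  qed
  have gQ: "{q\<in>Q. yt (fst q)} = insert (i0,c) ({q\<in>P. yt (fst q)})"
    unfolding Q_def using p i0 by auto
  have "card {q\<in>Q. yt (fst q)} = Suc (card {q\<in>P. yt (fst q)})"
    unfolding gQ using nin finP by auto
  with fQ chiQ show ?thesis by blast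
qed

lemma case_ii:
  assumes fin: "finite T" "finite Cs" and le: "card Cs \<le> card T"
  shows "\<exists>P. maximizer T Cs yt yc P \<and>
            card {i \<in> T - fst ` P. \<not> yt i} = min (card T - card Cs) (card {i\<in>T. \<not> yt i}) \<and>
            int (card {i \<in> T - fst ` P. yt i}) = max (int (card {i\<in>T. yt i}) - int (card Cs)) 0"
proof -
  let ?S = "{P. maximizer T Cs yt yc P}"
  let ?g = "\<lambda>P. card {q\<in>P. yt (fst q)}"
  have finS: "finite (?g ` ?S)"
    using full_finite[OF fin] by (auto intro: finite_subset simp: maximizer_def)
  have neS: "?g ` ?S \<noteq> {}" using maximizer_exists[OF fin le] by auto
  obtain P where PS: "P \<in> ?S" and gP: "?g P = Max (?g ` ?S)"
    using Max_in[OF finS neS] by auto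
  have gmax: "\<And>Q. Q \<in> ?S \<Longrightarrow> ?g Q \<le> ?g P" using finS gP by auto
  have mP: "maximizer T Cs yt yc P" using PS by simp
  hence full: "full_matching T Cs P" by (simp add: maximizer_def)
  have sub: "P \<subseteq> T \<times> Cs" and ifst: "inj_on fst P"
    and cP: "card P = card Cs"
    using full le by (auto simp: full_matching_def is_matching_def)
  define M where "M = fst ` P"
  have MT: "M \<subseteq> T" using sub M_def by auto
  have cM: "card M = card Cs" using card_image[OF ifst] cP M_def by simp
  have key: "(\<forall>i\<in>T - M. \<not> yt i) \<or> (\<forall>i\<in>M. yt i)"
  proof (rule ccontr)
    assume "\<not> ?thesis"
    then obtain i0 t where i0: "i0 \<in> T" "i0 \<notin> fst ` P" "yt i0" and t: "t \<in> M" "\<not> yt t"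
      using M_def by auto
    then obtain c where p: "(t,c) \<in> P" using M_def by force
    define Q where "Q = insert (i0,c) (P - {(t,c)})"
    have imp: "full_matching T Cs Q \<and> chi yt yc P \<le> chi yt yc Q \<and> ?g Q = Suc (?g P)"
      using improve[OF fin full i0 p t(2)] Q_def by simp
    have "maximizer T Cs yt yc Q" using imp mP unfolding maximizer_def by force
    then have "?g Q \<le> ?g P" using gmax by simp
    with imp show False by simp
  qed
  have finT: "finite M" using MT fin finite_subset by blast
  have sU: "card {i\<in>T. yt i} + card {i\<in>T. \<not> yt i} = card T" using card_sep_split[OF fin(1)] .
  have sM: "card {i\<in>M. yt i} + card {i\<in>M. \<not> yt i} = card M" using card_sep_split[OF finT] .
  have d1: "card {i \<in> T - M. yt i} = card {i\<in>T. yt i} - card {i\<in>M. yt i}"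
    using card_sep_diff[OF fin(1) MT] .
  have d0: "card {i \<in> T - M. \<not> yt i} = card {i\<in>T. \<not> yt i} - card {i\<in>M. \<not> yt i}"
    using card_sep_diff[OF fin(1) MT] .
  have m1: "card {i\<in>M. yt i} \<le> card {i\<in>T. yt i}" "card {i\<in>M. \<not> yt i} \<le> card {i\<in>T. \<not> yt i}"
    using MT fin by (auto intro!: card_mono)
  from key have "card {i \<in> T - M. \<not> yt i} = min (card T - card Cs) (card {i\<in>T. \<not> yt i}) \<and>
            int (card {i \<in> T - M. yt i}) = max (int (card {i\<in>T. yt i}) - int (card Cs)) 0"
  proof
    assume A: "\<forall>i\<in>T - M. \<not> yt i"
    have "{i\<in>T. yt i} \<subseteq> {i\<in>M. yt i}" using A by auto
    hence "card {i\<in>T. yt i} \<le> card {i\<in>M. yt i}" using finT by (auto intro!: card_mono)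
    then show ?thesis using sU sM d1 d0 m1 cM le by auto
  next
    assume B: "\<forall>i\<in>M. yt i"
    have "{i\<in>M. \<not> yt i} = {}" using B by auto
    hence "card {i\<in>M. \<not> yt i} = 0" by (metis card.empty)
    then show ?thesis using sU sM d1 d0 m1 cM le by auto
  qed
  then show ?thesis using mP M_def by blast
qed

lemma swap_full:
  assumes "full_matching T Cs Q" shows "full_matching Cs T (prod.swap ` Q)"
proof -
  have "card (prod.swap ` Q) = card Q" by (rule card_image) (metis inj_on_def swap_swap)
  moreover have "is_matching Cs T (prod.swap ` Q)"
    using assms unfolding full_matching_def is_matching_def inj_on_def by auto
  ultimately show ?thesis using assms by (auto simp: full_matching_def min.commute)
qed

lemma swap_chi: "chi (\<lambda>j. \<not> yc j) (\<lambda>i. \<not> yt i) (prod.swap ` Q) = chi yt yc Q"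
proof -
  have b: "{q\<in>prod.swap ` Q. \<not> yc (fst q) \<and> \<not> \<not> yt (snd q)} = prod.swap ` {p\<in>Q. yt (fst p) \<and> \<not> yc (snd p)}"
    by auto
  have c: "{q\<in>prod.swap ` Q. \<not> \<not> yc (fst q) \<and> \<not> yt (snd q)} = prod.swap ` {p\<in>Q. \<not> yt (fst p) \<and> yc (snd p)}"
    by auto
  have i: "\<And>A. card (prod.swap ` A) = card A" by (rule card_image) (metis inj_on_def swap_swap)
  show ?thesis unfolding chi_def countB_def countC_def b c i ..
qed

theorem claim1:
  fixes T :: "'a set" and Cs :: "'b set" and yt :: "'a \<Rightarrow> bool" and yc :: "'b \<Rightarrow> bool"
  assumes "finite T" and "finite Cs"
  defines "Nt \<equiv> card T" and "Nc \<equiv> card Cs"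
    and "U \<equiv> card {i \<in> T. yt i}" and "V \<equiv> card {i \<in> T. \<not> yt i}"
    and "\<eta> \<equiv> card {j \<in> Cs. yc j}"
  shows "(Nc > Nt \<longrightarrow> (\<exists>P. maximizer T Cs yt yc P \<and>
            card {j \<in> Cs - snd ` P. yc j} = min (Nc - Nt) \<eta> \<and>
            int (card {j \<in> Cs - snd ` P. \<not> yc j}) = max (int Nc - int Nt - int \<eta>) 0))
       \<and> (Nt \<ge> Nc \<longrightarrow> (\<exists>P. maximizer T Cs yt yc P \<and>
            card {i \<in> T - fst ` P. \<not> yt i} = min (Nt - Nc) V \<and>
            int (card {i \<in> T - fst ` P. yt i}) = max (int U - int Nc) 0))"
proof (intro conjI impI)
  assume "Nt \<ge> Nc"
  then show "\<exists>P. maximizer T Cs yt yc P \<and>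
            card {i \<in> T - fst ` P. \<not> yt i} = min (Nt - Nc) V \<and>
            int (card {i \<in> T - fst ` P. yt i}) = max (int U - int Nc) 0"
    using case_ii[OF assms(1,2), of yt yc] unfolding Nt_def Nc_def U_def V_def by simp
next
  assume lt: "Nc > Nt"
  obtain P' where P': "maximizer Cs T (\<lambda>j. \<not> yc j) (\<lambda>i. \<not> yt i) P'"
    "card {i \<in> Cs - fst ` P'. \<not> \<not> yc i} = min (card Cs - card T) (card {i\<in>Cs. \<not> \<not> yc i})"
    "int (card {i \<in> Cs - fst ` P'. \<not> yc i}) = max (int (card {i\<in>Cs. \<not> yc i}) - int (card T)) 0"
    using case_ii[OF assms(2,1), of "\<lambda>j. \<not> yc j" "\<lambda>i. \<not> yt i"] lt unfolding Nt_def Nc_def by auto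
  define P where "P = prod.swap ` P'"
  have PP: "prod.swap ` P = P'" unfolding P_def by (simp add: image_image)
  have sndP: "snd ` P = fst ` P'" unfolding P_def by (auto simp: image_image)
  have mP: "maximizer T Cs yt yc P"
  proof -
    have f: "full_matching T Cs P"
      using swap_full[of Cs T P'] P'(1) unfolding P_def maximizer_def by simp
    have "chi yt yc Q \<le> chi yt yc P" if "full_matching T Cs Q" for Q
    proof -
      have "full_matching Cs T (prod.swap ` Q)" using swap_full[OF that] .
      hence "chi (\<lambda>j. \<not> yc j) (\<lambda>i. \<not> yt i) (prod.swap ` Q) \<le> chi (\<lambda>j. \<not> yc j) (\<lambda>i. \<not> yt i) P'"
        using P'(1) unfolding maximizer_def by blast
      then show ?thesis using swap_chi[of yc yt Q] swap_chi[of yc yt P] PP by simp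
    qed
    with f show ?thesis unfolding maximizer_def by blast
  qed
  have split: "card {j\<in>Cs. yc j} + card {j\<in>Cs. \<not> yc j} = card Cs" using card_sep_split[OF assms(2)] .
  show "\<exists>P. maximizer T Cs yt yc P \<and>
            card {j \<in> Cs - snd ` P. yc j} = min (Nc - Nt) \<eta> \<and>
            int (card {j \<in> Cs - snd ` P. \<not> yc j}) = max (int Nc - int Nt - int \<eta>) 0"
  proof (intro exI conjI)
    show "maximizer T Cs yt yc P" by (rule mP)
    show "card {j \<in> Cs - snd ` P. yc j} = min (Nc - Nt) \<eta>"
      using P'(2) unfolding sndP Nc_def Nt_def \<eta>_def by simp
    show "int (card {j \<in> Cs - snd ` P. \<not> yc j}) = max (int Nc - int Nt - int \<eta>) 0"
      using P'(3) split unfolding sndP Nc_def Nt_def \<eta>_def by simp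
  qed
qed

end
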